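(* Let $\vec s=(s_1,\dots,s_k)\in\mathbb{Z}_+^k$ and let $\pi_1,\pi_2,\pi_3$ be three $\vec s$-multipermutations. Then there is a pair $i<j$ such that \[ \mathrm{LCS}(\pi_i,\pi_j)\geq\Bigl(\tfrac16\sum_{l=1}^k s_l^2\Bigr)^{1/3}. \] Equivalently, $\mathrm{LCS}_2(3,\mathcal P_{\vec s})\geq\bigl(\tfrac16\sum_{l} s_l^2\bigr)^{1/3}$.
   Context: For $\vec s\in\mathbb{Z}_+^k$, an $\vec s$-multipermutation is a word over $\{1,\dots,k\}$ in which each letter $l$ appears exactly $s_l$ times; $\mathcal P_{\vec s}$ is the set of all of them. $\mathrm{LCS}(w,w')$ is the length of a longest common subsequence of words $w,w'$. $\mathrm{LCS}_2(t,\mathcal P_{\vec s})$ is the minimum, over all sets of $t$ distinct elements of $\mathcal P_{\vec s}$, of the maximum $\mathrm{LCS}$ of two distinct members of the set. *)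

theory Defs
  imports Complex_Main "HOL-Library.Sublist"
begin

definition multiperm :: "nat \<Rightarrow> (nat \<Rightarrow> nat) \<Rightarrow> nat list \<Rightarrow> bool" where
  "multiperm k s w \<longleftrightarrow> set w \<subseteq> {1..k} \<and> (\<forall>l\<in>{1..k}. count_list w l = s l)"

definition LCS :: "'a list \<Rightarrow> 'a list \<Rightarrow> nat" where
  "LCS w w' = Max {length u | u. subseq u w \<and> subseq u w'}"

end

theory Submission
  imports Defs
begin

definition cmp :: "nat \<times> nat \<times> nat \<Rightarrow> nat \<times> nat \<times> nat \<Rightarrow> bool" where
  "cmp x y \<longleftrightarrow> (case x of (a,b,c) \<Rightarrow> case y of (a',b',c') \<Rightarrow>
     \<not>(a<a' \<and> b<b') \<and> \<not>(a<a' \<and> c<c') \<and> \<not>(b<b' \<and> c<c'))"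

lemma cmpD: "cmp (a,b,c) (a',b',c') \<Longrightarrow> \<not>(a<a' \<and> b<b') \<and> \<not>(a<a' \<and> c<c') \<and> \<not>(b<b' \<and> c<c')"
  by (simp add: cmp_def)

lemma key4:
  fixes a b c a1 b1 c1 a2 b2 c2 a3 b3 c3 :: nat
  assumes C: "\<And>x y. x \<in> S \<Longrightarrow> y \<in> S \<Longrightarrow> cmp x y"
  and S: "(a,b,c) \<in> S" "(a,b1,c1) \<in> S" "(a2,b,c2) \<in> S" "(a3,b3,c) \<in> S"
  and y: "b < b1 \<or> (b1 = b \<and> c < c1)"
  and z: "a2 < a \<or> (a2 = a \<and> c < c2)"
  and w: "a3 < a \<or> (a3 = a \<and> b3 < b)"
  shows False
proof -
  have xy: "\<not>(b<b1 \<and> c<c1)" using cmpD[OF C[OF S(1) S(2)]] by auto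
  have xz: "\<not>(a2<a \<and> c2<c)" using cmpD[OF C[OF S(3) S(1)]] by auto
  have wy: "\<not>(a3<a \<and> c<c1) \<and> \<not>(b3<b1 \<and> c<c1)" using cmpD[OF C[OF S(4) S(2)]] by auto
  have zy: "\<not>(a2<a \<and> b<b1)" using cmpD[OF C[OF S(3) S(2)]] by auto
  have wz: "\<not>(a3<a2 \<and> c<c2) \<and> \<not>(b3<b \<and> c<c2)" using cmpD[OF C[OF S(4) S(3)]] by auto
  show False using y z w xy xz wy zy wz by auto
qed

lemma clique_bound:
  fixes S :: "(nat \<times> nat \<times> nat) set"
  assumes sub: "S \<subseteq> A \<times> B \<times> C" and fin: "finite A" "finite B" "finite C"
    and C: "\<And>x y. x \<in> S \<Longrightarrow> y \<in> S \<Longrightarrow> cmp x y"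
  shows "card S \<le> card A + card B + card C"
proof -
  define c1 where "c1 = (\<lambda>(a::nat,b::nat,c::nat). \<forall>b' c'. (a,b',c') \<in> S \<longrightarrow> b' < b \<or> (b' = b \<and> c' \<le> c))"
  define c2 where "c2 = (\<lambda>(a::nat,b::nat,c::nat). \<forall>a' c'. (a',b,c') \<in> S \<longrightarrow> a < a' \<or> (a' = a \<and> c' \<le> c))"
  define c3 where "c3 = (\<lambda>(a::nat,b::nat,c::nat). \<forall>a' b'. (a',b',c) \<in> S \<longrightarrow> a < a' \<or> (a' = a \<and> b \<le> b'))"
  have cov: "c1 x \<or> c2 x \<or> c3 x" if "x \<in> S" for x
  proof (rule ccontr)
    obtain a b c where x: "x = (a,b,c)" by (cases x) auto
    assume "\<not> (c1 x \<or> c2 x \<or> c3 x)"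
    then have n1: "\<not> c1 x" and n2: "\<not> c2 x" and n3: "\<not> c3 x" by auto
    from n1 have "\<exists>b1 c1'. (a,b1,c1') \<in> S \<and> (b < b1 \<or> (b1 = b \<and> c < c1'))"
      unfolding c1_def x by (auto simp: not_less) (metis le_neq_implies_less not_le)+
    then obtain b1 c1' where y: "(a,b1,c1') \<in> S" "b < b1 \<or> (b1 = b \<and> c < c1')" by blast
    from n2 have "\<exists>a2 c2'. (a2,b,c2') \<in> S \<and> (a2 < a \<or> (a2 = a \<and> c < c2'))"
      unfolding c2_def x by (auto simp: not_less) (metis le_neq_implies_less not_le)+
    then obtain a2 c2' where z: "(a2,b,c2') \<in> S" "a2 < a \<or> (a2 = a \<and> c < c2')" by blast
    from n3 have "\<exists>a3 b3. (a3,b3,c) \<in> S \<and> (a3 < a \<or> (a3 = a \<and> b3 < b))"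
      unfolding c3_def x by (auto simp: not_less) (metis le_neq_implies_less not_le)+
    then obtain a3 b3 where w: "(a3,b3,c) \<in> S" "a3 < a \<or> (a3 = a \<and> b3 < b)" by blast
    show False using key4[OF C, of S a b c b1 c1' a2 c2' a3 b3] that x y z w by blast
  qed
  define f where "f = (\<lambda>x::nat\<times>nat\<times>nat. if c1 x then (0::nat, fst x) else if c2 x then (1, fst (snd x)) else (2, snd (snd x)))"
  have inj: "inj_on f S"
  proof (rule inj_onI)
    fix x y assume xs: "x \<in> S" and ys: "y \<in> S" and e: "f x = f y"
    obtain a b c where x: "x = (a,b,c)" by (cases x) auto
    obtain a' b' c' where y: "y = (a',b',c')" by (cases y) auto
    show "x = y"
    proof (cases "c1 x")
      case True
      have fx: "f x = (0,a)" using True by (simp add: f_def x)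
      have "c1 y"
      proof (rule ccontr)
        assume "\<not> c1 y"
        then have "fst (f y) \<noteq> 0" by (simp add: f_def)
        then show False using e fx by (metis fst_conv)
      qed
      moreover have "f y = (0,a')" using \<open>c1 y\<close> by (simp add: f_def y)
      ultimately have "c1 y" "a = a'" using e fx by auto
      then have "b' < b \<or> (b' = b \<and> c' \<le> c)" "b < b' \<or> (b = b' \<and> c \<le> c')"
        using True xs ys unfolding c1_def x y by auto
      then show ?thesis using \<open>a = a'\<close> x y by auto
    next
      case F1: False
      show ?thesis
      proof (cases "c2 x")
        case True
        have fx: "f x = (1,b)" using True F1 by (simp add: f_def x)
        have "\<not> c1 y \<and> c2 y"
        proof (rule ccontr)
          assume "\<not> (\<not> c1 y \<and> c2 y)"
          then have "fst (f y) \<noteq> 1" by (auto simp: f_def)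
          then show False using e fx by (metis fst_conv)
        qed
        moreover have "f y = (1,b')" using calculation by (simp add: f_def y)
        ultimately have "c2 y" "b = b'" using e fx by auto
        then have "a < a' \<or> (a' = a \<and> c' \<le> c)" "a' < a \<or> (a = a' \<and> c \<le> c')"
          using True xs ys unfolding c2_def x y by auto
        then show ?thesis using \<open>b = b'\<close> x y by auto
      next
        case False
        have fx: "f x = (2, c)" using F1 False by (simp add: f_def x)
        have ny: "\<not> c1 y \<and> \<not> c2 y"
        proof (rule ccontr)
          assume "\<not> (\<not> c1 y \<and> \<not> c2 y)"
          then have "fst (f y) \<noteq> 2" by (auto simp: f_def)
          then show False using e fx by (metis fst_conv)
        qed
        then have fy: "f y = (2, c')" by (simp add: f_def y)
        have "c3 x" "c3 y" "c = c'" using fx fy e F1 False ny cov[OF xs] cov[OF ys] by auto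
        then have "a < a' \<or> (a' = a \<and> b \<le> b')" "a' < a \<or> (a = a' \<and> b' \<le> b)"
          using xs ys unfolding c3_def x y by auto
        then show ?thesis using \<open>c = c'\<close> x y by auto
      qed
    qed
  qed
  have img: "f ` S \<subseteq> ({0} \<times> A) \<union> ({1} \<times> B) \<union> ({2} \<times> C)"
  proof
    fix z assume "z \<in> f ` S"
    then obtain x where xs: "x \<in> S" and z: "z = f x" by blast
    obtain a b c where x: "x = (a,b,c)" by (cases x) auto
    have "a \<in> A" "b \<in> B" "c \<in> C" using sub xs x by auto
    then show "z \<in> ({0} \<times> A) \<union> ({1} \<times> B) \<union> ({2} \<times> C)"
      unfolding z f_def x by simp
  qed
  have "card S = card (f ` S)" using card_image[OF inj] by simp
  also have "\<dots> \<le> card (({0} \<times> A) \<union> ({1} \<times> B) \<union> ({2::nat} \<times> C))"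
    using img fin by (intro card_mono) auto
  also have "\<dots> \<le> card ({0::nat} \<times> A) + card ({1::nat} \<times> B) + card ({2::nat} \<times> C)"
    by (rule order_trans[OF card_Un_le add_right_mono[OF card_Un_le]])
  also have "\<dots> = card A + card B + card C" by (simp add: card_cartesian_product)
  finally show ?thesis .
qed

lemma LCS_fin: "finite {length u | u. subseq u w \<and> subseq u w'}"
proof (rule finite_subset[of _ "{..length w}"])
  show "{length u | u. subseq u w \<and> subseq u w'} \<subseteq> {..length w}"
    by (auto intro: list_emb_length)
qed simp

lemma LCS_ge: "subseq u w \<Longrightarrow> subseq u w' \<Longrightarrow> length u \<le> LCS w w'"
  unfolding LCS_def by (rule Max_ge[OF LCS_fin]) auto

lemma LCS_ex: "\<exists>u. subseq u w \<and> subseq u w' \<and> length u = LCS w w'"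
proof -
  have "LCS w w' \<in> {length u | u. subseq u w \<and> subseq u w'}"
    unfolding LCS_def by (rule Max_in[OF LCS_fin]) auto
  then show ?thesis by auto
qed

definition g :: "'a list \<Rightarrow> 'a list \<Rightarrow> nat \<Rightarrow> nat \<Rightarrow> nat" where
  "g w v i j = LCS (take (Suc i) w) (take (Suc j) v)"

lemma g_le: "g w v i j \<le> LCS w v"
proof -
  obtain u where u: "subseq u (take (Suc i) w)" "subseq u (take (Suc j) v)" "length u = g w v i j"
    using LCS_ex unfolding g_def by blast
  have "subseq u w" using u(1) prefix_imp_subseq[OF take_is_prefix] subseq_order.trans by blast
  moreover have "subseq u v" using u(2) prefix_imp_subseq[OF take_is_prefix] subseq_order.trans by blast
  ultimately show ?thesis using LCS_ge u(3) by metis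
qed

lemma g_pos: assumes "i < length w" "j < length v" "w!i = v!j" shows "1 \<le> g w v i j"
proof -
  have "subseq [w!i] (take (Suc i) w)" using assms by (simp add: take_Suc_conv_app_nth subseq_singleton_left)
  moreover have "subseq [w!i] (take (Suc j) v)" using assms by (simp add: take_Suc_conv_app_nth subseq_singleton_left)
  ultimately have "length [w!i] \<le> LCS (take (Suc i) w) (take (Suc j) v)" by (rule LCS_ge)
  then show ?thesis unfolding g_def by simp
qed

lemma g_strict:
  assumes "i < i'" "j < j'" "i' < length w" "j' < length v" "w!i' = v!j'"
  shows "g w v i j < g w v i' j'"
proof -
  obtain u where u: "subseq u (take (Suc i) w)" "subseq u (take (Suc j) v)" "length u = g w v i j"
    using LCS_ex unfolding g_def by blast
  have pw: "prefix (take (Suc i) w) (take i' w)"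
  proof -
    have "take (Suc i) w = take (Suc i) (take i' w)" using assms(1) by (simp add: min_def)
    then show ?thesis by (metis take_is_prefix)
  qed
  have pv: "prefix (take (Suc j) v) (take j' v)"
  proof -
    have "take (Suc j) v = take (Suc j) (take j' v)" using assms(2) by (simp add: min_def)
    then show ?thesis by (metis take_is_prefix)
  qed
  have "subseq u (take i' w)" using u(1) prefix_imp_subseq[OF pw] subseq_order.trans by blast
  then have 1: "subseq (u @ [w!i']) (take (Suc i') w)"
    using assms by (simp add: take_Suc_conv_app_nth subseq_singleton_left)
  have "subseq u (take j' v)" using u(2) prefix_imp_subseq[OF pv] subseq_order.trans by blast
  then have 2: "subseq (u @ [w!i']) (take (Suc j') v)"
    using assms by (simp add: take_Suc_conv_app_nth subseq_singleton_left)
  show ?thesis using LCS_ge[OF 1 2] u(3) unfolding g_def by simp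
qed

lemma pos_card: "card {i. i < length w \<and> w!i = l} = count_list w l"
  by (simp add: count_list_eq_length_filter length_filter_conv_card eq_commute)

lemma final_real:
  fixes X :: real and L :: nat
  assumes "0 \<le> X" "X \<le> 3 * real L ^ 3"
  shows "(X / 6) powr (1/3) \<le> real L"
proof (cases "L = 0")
  case True
  then have "X = 0" using assms by simp
  then show ?thesis by simp
next
  case False
  have "(X / 6) powr (1/3) \<le> (real L ^ 3) powr (1/3)"
    using assms by (intro powr_mono2) auto
  also have "(real L ^ 3) powr (1/3) = real L"
  proof -
    have h: "real L ^ 3 = real L powr 3" using False powr_realpow[of "real L" 3] by simp
    have "(real L ^ 3) powr (1/3) = real L powr (3 * (1/3))" unfolding h by (rule powr_powr)
    then show ?thesis using False by simp
  qed
  finally show ?thesis .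
qed

theorem theorem11:
  fixes k :: nat and s :: "nat \<Rightarrow> nat" and p1 p2 p3 :: "nat list"
  assumes "\<forall>l\<in>{1..k}. s l \<ge> 1"
    and "multiperm k s p1" and "multiperm k s p2" and "multiperm k s p3"
  shows "real (LCS p1 p2) \<ge> ((\<Sum>l=1..k. real (s l) ^ 2) / 6) powr (1/3)
       \<or> real (LCS p1 p3) \<ge> ((\<Sum>l=1..k. real (s l) ^ 2) / 6) powr (1/3)
       \<or> real (LCS p2 p3) \<ge> ((\<Sum>l=1..k. real (s l) ^ 2) / 6) powr (1/3)"
proof -
  define L where "L = max (LCS p1 p2) (max (LCS p1 p3) (LCS p2 p3))"
  define F where "F = (\<lambda>(i::nat,j::nat,k::nat). (g p1 p2 i j, g p1 p3 i k, g p2 p3 j k))"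
  define P where "P = (\<lambda>w (l::nat). {i. i < length w \<and> w!i = l})"
  define T where "T = (\<lambda>l. P p1 l \<times> P p2 l \<times> P p3 l)"
  have finP: "finite (P w l)" for w l unfolding P_def by auto
  have cardP: "card (P w l) = s l" if "multiperm k s w" "l \<in> {1..k}" for w l
    using that pos_card[of w l] unfolding P_def multiperm_def by auto
  have cardT: "card (T l) = s l ^ 3" if "l \<in> {1..k}" for l
    unfolding T_def using cardP[OF assms(2) that] cardP[OF assms(3) that] cardP[OF assms(4) that]
    by (simp add: card_cartesian_product power3_eq_cube)
  have finT: "finite (T l)" for l unfolding T_def using finP by auto
  have cmp1: "\<not>(i<i' \<and> j<j') \<and> \<not>(i<i' \<and> k<k') \<and> \<not>(j<j' \<and> k<k')"
    if x: "(i,j,k) \<in> T l" and y: "(i',j',k') \<in> T l'" and e: "F (i,j,k) = F (i',j',k')" for i j k i' j' k' l l'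
  proof -
    have b: "i' < length p1" "j' < length p2" "k' < length p3" "p1!i' = l'" "p2!j' = l'" "p3!k' = l'"
      using y unfolding T_def P_def by auto
    have e1: "g p1 p2 i j = g p1 p2 i' j'" "g p1 p3 i k = g p1 p3 i' k'" "g p2 p3 j k = g p2 p3 j' k'"
      using e unfolding F_def by auto
    show ?thesis
    proof (intro conjI notI)
      assume "i<i' \<and> j<j'"
      then have "g p1 p2 i j < g p1 p2 i' j'" using b by (intro g_strict) auto
      then show False using e1 by simp
    next
      assume "i<i' \<and> k<k'"
      then have "g p1 p3 i k < g p1 p3 i' k'" using b by (intro g_strict) auto
      then show False using e1 by simp
    next
      assume "j<j' \<and> k<k'"
      then have "g p2 p3 j k < g p2 p3 j' k'" using b by (intro g_strict) auto
      then show False using e1 by simp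
    qed
  qed
  have fiber: "card {x \<in> T l. F x = z} \<le> 3 * s l" if l: "l \<in> {1..k}" for l z
  proof -
    have "card {x \<in> T l. F x = z} \<le> card (P p1 l) + card (P p2 l) + card (P p3 l)"
    proof (rule clique_bound)
      show "{x \<in> T l. F x = z} \<subseteq> P p1 l \<times> P p2 l \<times> P p3 l" unfolding T_def by auto
      show "finite (P p1 l)" "finite (P p2 l)" "finite (P p3 l)" using finP by auto
      fix x y assume "x \<in> {x \<in> T l. F x = z}" "y \<in> {x \<in> T l. F x = z}"
      moreover obtain i j k where "x = (i,j,k)" by (cases x) auto
      moreover obtain i' j' k' where "y = (i',j',k')" by (cases y) auto
      ultimately show "cmp x y" using cmp1[of i j k l i' j' k' l] by (auto simp: cmp_def)
    qed
    then show ?thesis using cardP[OF assms(2) l] cardP[OF assms(3) l] cardP[OF assms(4) l] by simp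
  qed
  have Tle: "card (T l) \<le> card (F ` T l) * (3 * s l)" if l: "l \<in> {1..k}" for l
  proof -
    have eqT: "T l = (\<Union>z\<in>F ` T l. {x \<in> T l. F x = z})" by auto
    have "card (T l) = card (\<Union>z\<in>F ` T l. {x \<in> T l. F x = z})" by (rule arg_cong[OF eqT])
    also have "\<dots> \<le> (\<Sum>z\<in>F ` T l. card {x \<in> T l. F x = z})"
      by (rule card_UN_le) (rule finite_imageI[OF finT])
    also have "\<dots> \<le> of_nat (card (F ` T l)) * (3 * s l)"
      by (rule sum_bounded_above) (rule fiber[OF l])
    finally show ?thesis by simp
  qed
  have sq: "s l ^ 2 \<le> 3 * card (F ` T l)" if l: "l \<in> {1..k}" for l
  proof -
    have sp: "s l \<ge> 1" using assms(1) l by auto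
    have "s l * (s l ^ 2) \<le> s l * (3 * card (F ` T l))"
      using Tle[OF l] cardT[OF l] by (simp add: power3_eq_cube power2_eq_square algebra_simps)
    then show ?thesis using sp by simp
  qed
  have img: "F ` T l \<subseteq> {1..L} \<times> {1..L} \<times> {1..L}" for l
  proof
    fix z assume "z \<in> F ` T l"
    then obtain i j k where x: "(i,j,k) \<in> T l" and z: "z = F (i,j,k)" by auto
    have b: "i < length p1" "j < length p2" "k < length p3" "p1!i = l" "p2!j = l" "p3!k = l"
      using x unfolding T_def P_def by auto
    have "1 \<le> g p1 p2 i j" "1 \<le> g p1 p3 i k" "1 \<le> g p2 p3 j k" using b g_pos[of i p1 j p2] g_pos[of i p1 k p3] g_pos[of j p2 k p3] by auto
    moreover have "g p1 p2 i j \<le> L" "g p1 p3 i k \<le> L" "g p2 p3 j k \<le> L"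
      using g_le[of p1 p2 i j] g_le[of p1 p3 i k] g_le[of p2 p3 j k] unfolding L_def by auto
    ultimately show "z \<in> {1..L} \<times> {1..L} \<times> {1..L}" unfolding z F_def by auto
  qed
  have disj: "F ` T l \<inter> F ` T l' = {}" if "l \<noteq> l'" for l l'
  proof (rule ccontr)
    assume "F ` T l \<inter> F ` T l' \<noteq> {}"
    then obtain i j k i' j' k' where x: "(i,j,k) \<in> T l" and y: "(i',j',k') \<in> T l'"
      and e: "F (i,j,k) = F (i',j',k')" by auto (metis prod_cases3)
    have "i \<noteq> i'" "j \<noteq> j'" "k \<noteq> k'" using x y that unfolding T_def P_def by auto
    moreover have "\<not>(i<i' \<and> j<j') \<and> \<not>(i<i' \<and> k<k') \<and> \<not>(j<j' \<and> k<k')"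
      using cmp1[OF x y e] .
    moreover have "\<not>(i'<i \<and> j'<j) \<and> \<not>(i'<i \<and> k'<k) \<and> \<not>(j'<j \<and> k'<k)"
      using cmp1[OF y x e[symmetric]] .
    ultimately show False by linarith
  qed
  have "(\<Sum>l=1..k. s l ^ 2) \<le> (\<Sum>l=1..k. 3 * card (F ` T l))"
    by (rule sum_mono) (rule sq)
  also have "\<dots> = 3 * card (\<Union>l\<in>{1..k}. F ` T l)"
    by (subst card_UN_disjoint) (auto simp: sum_distrib_left finT disj)
  also have "card (\<Union>l\<in>{1..k}. F ` T l) \<le> card ({1..L} \<times> {1..L} \<times> {1..L})"
    using img by (intro card_mono) auto
  also have "card ({1..L} \<times> {1..L} \<times> {1..L}) = L ^ 3"
    by (simp add: card_cartesian_product power3_eq_cube)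
  finally have nat_bound: "(\<Sum>l=1..k. s l ^ 2) \<le> 3 * L ^ 3" by simp
  have "(\<Sum>l=1..k. real (s l) ^ 2) = real (\<Sum>l=1..k. s l ^ 2)" by simp
  also have "\<dots> \<le> 3 * real L ^ 3" 
  proof -
    have "real (\<Sum>l=1..k. s l ^ 2) \<le> real (3 * L ^ 3)" using nat_bound by (rule of_nat_mono)
    then show ?thesis by simp
  qed
  finally have "((\<Sum>l=1..k. real (s l) ^ 2) / 6) powr (1/3) \<le> real L"
    by (intro final_real) (auto intro: sum_nonneg)
  moreover have "L = LCS p1 p2 \<or> L = LCS p1 p3 \<or> L = LCS p2 p3" unfolding L_def by (simp add: max_def)
  ultimately show ?thesis by fastforce
qed

end
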